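(* Let $b>\pi$ and let $V$ be real-valued and absolutely continuous on $[0,b]$. Then for each $z\in\mathbb C$ the series $$\sum_{t\in\operatorname{spec}(H_\pi(\pi/2))}\frac{k_\pi(t,\overline z)}{k_\pi(t,t)}\,\xi(x,t)$$ converges absolutely and uniformly with respect to $x\in[0,b]$.
   Context: $\xi(x,z)$ is the solution on $[0,b]$ of $-\xi''+V\xi=z\xi$, $\xi(0,z)=1$, $\xi'(0,z)=0$. $H_\pi(\pi/2)$ is the selfadjoint operator $-\frac{d^2}{dx^2}+V$ in $L_2(0,\pi)$ with $\varphi'(0)=0=\varphi'(\pi)$ (its spectrum is the set of $\lambda$ with $\xi'(\pi,\lambda)=0$). For real $t$, $k_\pi(t,\overline z)=\int_0^\pi\xi(x,t)\xi(x,z)\,dx$ and $k_\pi(t,t)=\int_0^\pi\xi(x,t)^2dx$. *)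

theory Defs
  imports "HOL-Analysis.Analysis"
begin

definition abs_continuous_on :: "real \<Rightarrow> real \<Rightarrow> (real \<Rightarrow> real) \<Rightarrow> bool" where
  "abs_continuous_on a b f \<longleftrightarrow>
     (\<forall>\<epsilon>>0. \<exists>\<delta>>0. \<forall>(n::nat) (l::nat \<Rightarrow> real) (r::nat \<Rightarrow> real).
        (\<forall>i<n. a \<le> l i \<and> l i \<le> r i \<and> r i \<le> b) \<and>
        (\<forall>i<n. \<forall>j<n. i \<noteq> j \<longrightarrow> r i \<le> l j \<or> r j \<le> l i) \<and>
        (\<Sum>i<n. r i - l i) < \<delta>
        \<longrightarrow> (\<Sum>i<n. \<bar>f (r i) - f (l i)\<bar>) < \<epsilon>)"

text \<open>k_pi(t, conj z) = integral over [0,pi] of xi(x,t) xi(x,z).\<close>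
definition k_pi :: "(real \<Rightarrow> complex \<Rightarrow> complex) \<Rightarrow> real \<Rightarrow> complex \<Rightarrow> complex" where
  "k_pi xi t z = integral {0..pi} (\<lambda>x. xi x (complex_of_real t) * xi x z)"

end

theory Submission
  imports Defs
begin


lemma unif_M:
  fixes g :: "'a \<Rightarrow> 'c \<Rightarrow> 'b::banach" and M :: "'a \<Rightarrow> real"
  assumes M: "M summable_on S" and bd: "\<And>t x. t\<in>S \<Longrightarrow> x\<in>X \<Longrightarrow> norm (g t x) \<le> M t"
  shows "uniform_limit X (\<lambda>F x. \<Sum>t\<in>F. g t x) (\<lambda>x. \<Sum>\<^sub>\<infinity>t\<in>S. g t x) (finite_subsets_at_top S)"
proof (rule uniform_limitI)
  fix e :: real assume e: "e > 0"
  have "((\<lambda>F. sum M F) \<longlongrightarrow> infsum M S) (finite_subsets_at_top S)"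
    using M has_sum_def has_sum_infsum by blast
  hence ev: "\<forall>\<^sub>F F in finite_subsets_at_top S. dist (sum M F) (infsum M S) < e"
    using e tendstoD by blast
  have ev2: "\<forall>\<^sub>F F in finite_subsets_at_top S. finite F \<and> F \<subseteq> S"
    by (simp add: eventually_finite_subsets_at_top_weakI)
  show "\<forall>\<^sub>F F in finite_subsets_at_top S. \<forall>x\<in>X. dist (\<Sum>t\<in>F. g t x) (\<Sum>\<^sub>\<infinity>t\<in>S. g t x) < e"
    using ev ev2
  proof eventually_elim
    case (elim F)
    hence F: "finite F" "F \<subseteq> S" by auto
    show ?case
    proof
      fix x assume x: "x \<in> X"
      have gabs: "(\<lambda>t. g t x) abs_summable_on S"
        by (rule summable_on_comparison_test[OF M]) (use bd x in auto)
      have gs: "(\<lambda>t. g t x) summable_on S" by (rule abs_summable_summable[OF gabs])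
      have gsD: "(\<lambda>t. g t x) summable_on (S - F)" using gs summable_on_subset_banach by blast
      have Ms: "M summable_on (S - F)" using M summable_on_subset_banach by blast
      have gabsD: "(\<lambda>t. g t x) abs_summable_on (S - F)"
        using gabs summable_on_subset_banach by blast
      have eq: "(\<Sum>\<^sub>\<infinity>t\<in>S. g t x) - (\<Sum>t\<in>F. g t x) = (\<Sum>\<^sub>\<infinity>t\<in>S - F. g t x)"
        using infsum_Diff[OF gs _ F(2)] F(1) by simp
      have eqM: "infsum M S - sum M F = infsum M (S - F)"
        using infsum_Diff[OF M _ F(2)] F(1) by simp
      have "norm (\<Sum>\<^sub>\<infinity>t\<in>S - F. g t x) \<le> (\<Sum>\<^sub>\<infinity>t\<in>S - F. norm (g t x))"
        by (rule norm_infsum_bound[OF gabsD])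
      also have "\<dots> \<le> infsum M (S - F)"
        by (rule infsum_mono[OF gabsD Ms]) (use bd x in auto)
      also have "\<dots> < e" using elim eqM by (simp add: dist_norm)
      finally show "dist (\<Sum>t\<in>F. g t x) (\<Sum>\<^sub>\<infinity>t\<in>S. g t x) < e"
        using eq by (metis dist_norm dist_commute)
    qed
  qed
qed



lemma dec_deriv:
  fixes g g' :: "real \<Rightarrow> real"
  assumes d: "\<And>x. x\<in>{a..c} \<Longrightarrow> (g has_real_derivative g' x) (at x within {a..c})"
    and n: "\<And>x. x\<in>{a..c} \<Longrightarrow> g' x \<le> 0" and xy: "a \<le> x" "x \<le> y" "y \<le> c"
  shows "g y \<le> g x"
proof -
  have "\<exists>z\<in>{x..y}. g y - g x = (\<lambda>h. g' z * h) (y - x)"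
  proof (rule mvt_very_simple)
    fix z assume z: "x \<le> z" "z \<le> y"
    have "(g has_real_derivative g' z) (at z within {a..c})" using d z xy by auto
    hence "(g has_real_derivative g' z) (at z within {x..y})"
      by (rule DERIV_subset) (use xy in auto)
    thus "(g has_derivative (\<lambda>h. g' z * h)) (at z within {x..y})"
      by (simp add: has_field_derivative_def)
  qed (use xy in auto)
  then obtain z where z: "z \<in> {x..y}" "g y - g x = g' z * (y - x)" by auto
  have "g' z \<le> 0" using n z xy by auto
  hence "g' z * (y - x) \<le> 0" using xy by (simp add: mult_nonpos_nonneg)
  thus ?thesis using z by simp
qed

lemma inc_deriv:
  fixes g g' :: "real \<Rightarrow> real"
  assumes d: "\<And>x. x\<in>{a..c} \<Longrightarrow> (g has_real_derivative g' x) (at x within {a..c})"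
    and n: "\<And>x. x\<in>{a..c} \<Longrightarrow> g' x \<ge> 0" and xy: "a \<le> x" "x \<le> y" "y \<le> c"
  shows "g x \<le> g y"
proof -
  have "(\<lambda>x. - g x) y \<le> (\<lambda>x. - g x) x"
    by (rule dec_deriv[where g="\<lambda>x. - g x" and g'="\<lambda>x. - g' x"]) (use d n xy in \<open>auto intro!: derivative_eq_intros\<close>)
  thus ?thesis by simp
qed

lemma gronwall2:
  fixes e e' :: "real \<Rightarrow> real"
  assumes d: "\<And>x. x\<in>{0..c} \<Longrightarrow> (e has_real_derivative e' x) (at x within {0..c})"
    and bd: "\<And>x. x\<in>{0..c} \<Longrightarrow> \<bar>e' x\<bar> \<le> \<alpha> * e x" and x: "x\<in>{0..c}"
  shows "e x \<le> e 0 * exp (\<alpha>*x)" "e 0 * exp (-\<alpha>*x) \<le> e x"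
proof -
  have "(\<lambda>y. e y * exp (-\<alpha>*y)) x \<le> (\<lambda>y. e y * exp (-\<alpha>*y)) 0"
  proof (rule dec_deriv[where a=0 and c=c and g="\<lambda>y. e y * exp (-\<alpha>*y)" and g'="\<lambda>y. (e' y - \<alpha> * e y) * exp (-\<alpha>*y)"])
    fix y assume y: "y \<in> {0..c}"
    show "((\<lambda>y. e y * exp (- \<alpha> * y)) has_real_derivative (e' y - \<alpha> * e y) * exp (- \<alpha> * y)) (at y within {0..c})"
      using d[OF y] by (auto intro!: derivative_eq_intros simp: algebra_simps)
    have "e' y - \<alpha> * e y \<le> 0" using bd[OF y] by linarith
    thus "(e' y - \<alpha> * e y) * exp (- \<alpha> * y) \<le> 0" by (simp add: mult_nonpos_nonneg)
  qed (use x in auto)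
  hence "e x * exp (-\<alpha>*x) * exp (\<alpha>*x) \<le> e 0 * exp (\<alpha>*x)" by simp
  thus "e x \<le> e 0 * exp (\<alpha>*x)" by (simp add: mult.assoc exp_add[symmetric])
  have "(\<lambda>y. e y * exp (\<alpha>*y)) 0 \<le> (\<lambda>y. e y * exp (\<alpha>*y)) x"
  proof (rule inc_deriv[where a=0 and c=c and g="\<lambda>y. e y * exp (\<alpha>*y)" and g'="\<lambda>y. (e' y + \<alpha> * e y) * exp (\<alpha>*y)"])
    fix y assume y: "y \<in> {0..c}"
    show "((\<lambda>y. e y * exp (\<alpha> * y)) has_real_derivative (e' y + \<alpha> * e y) * exp (\<alpha> * y)) (at y within {0..c})"
      using d[OF y] by (auto intro!: derivative_eq_intros simp: algebra_simps)
    have "e' y + \<alpha> * e y \<ge> 0" using bd[OF y] by linarith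
    thus "(e' y + \<alpha> * e y) * exp (\<alpha> * y) \<ge> 0" by simp
  qed (use x in auto)
  hence "e 0 * exp (-\<alpha>*x) \<le> e x * exp (\<alpha>*x) * exp (-\<alpha>*x)" by simp
  thus "e 0 * exp (-\<alpha>*x) \<le> e x" by (simp add: mult.assoc exp_add[symmetric])
qed




lemma two_ab: "2 * \<bar>a * b\<bar> \<le> a^2 + (b::real)^2"
proof -
  have "0 \<le> (\<bar>a\<bar> - \<bar>b\<bar>)^2" by simp
  thus ?thesis by (simp add: power2_eq_square algebra_simps abs_mult)
qed

locale SL =
  fixes b :: real and V :: "real \<Rightarrow> real" and xi xi' :: "real \<Rightarrow> complex \<Rightarrow> complex"
  assumes b: "b > pi" and Vc: "continuous_on {0..b} V"
    and init0: "\<And>w. xi 0 w = 1" and init1: "\<And>w. xi' 0 w = 0"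
    and d0: "\<And>w x. x \<in> {0..b} \<Longrightarrow>
          ((\<lambda>y. xi y w) has_vector_derivative xi' x w) (at x within {0..b})"
    and d1: "\<And>w x. x \<in> {0..b} \<Longrightarrow>
          ((\<lambda>y. xi' y w) has_vector_derivative (complex_of_real (V x) - w) * xi x w)
             (at x within {0..b})"
begin

definition L where "L = (SOME L. L \<ge> 0 \<and> (\<forall>x\<in>{0..b}. \<bar>V x\<bar> \<le> L))"

lemma L: "L \<ge> 0" "\<And>x. x\<in>{0..b} \<Longrightarrow> \<bar>V x\<bar> \<le> L"
proof -
  have "compact (V ` {0..b})" by (rule compact_continuous_image[OF Vc]) simp
  then obtain B where "B > 0" "\<forall>y\<in>V ` {0..b}. norm y \<le> B"
    using compact_imp_bounded bounded_pos by metis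
  hence "\<exists>L. L \<ge> 0 \<and> (\<forall>x\<in>{0..b}. \<bar>V x\<bar> \<le> L)" by (intro exI[of _ B]) auto
  hence "L \<ge> 0 \<and> (\<forall>x\<in>{0..b}. \<bar>V x\<bar> \<le> L)" unfolding L_def by (rule someI_ex)
  thus "L \<ge> 0" "\<And>x. x\<in>{0..b} \<Longrightarrow> \<bar>V x\<bar> \<le> L" by auto
qed

lemma pi_b: "{0..pi} \<subseteq> {0..b}" using b by auto

lemma cont0: "continuous_on {0..b} (\<lambda>x. xi x w)"
  using d0 has_vector_derivative_continuous continuous_on_eq_continuous_within by blast

lemma cont1: "continuous_on {0..b} (\<lambda>x. xi' x w)"
  using d1 has_vector_derivative_continuous continuous_on_eq_continuous_within by blast

lemma lagrange:
  assumes ne: "w1 \<noteq> w2"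
  shows "((\<lambda>x. xi x w1 * xi x w2) has_integral
           ((xi pi w1 * xi' pi w2 - xi' pi w1 * xi pi w2) / (w1 - w2))) {0..pi}"
proof -
  define W where "W x = xi x w1 * xi' x w2 - xi' x w1 * xi x w2" for x
  have "((\<lambda>x. (w1 - w2) * (xi x w1 * xi x w2)) has_integral (W pi - W 0)) {0..pi}"
  proof (rule fundamental_theorem_of_calculus)
    fix x assume x: "x \<in> {0..pi}"
    hence xb: "x \<in> {0..b}" using pi_b by auto
    have h: "\<And>w. ((\<lambda>y. xi y w) has_vector_derivative xi' x w) (at x within {0..pi})"
            "\<And>w. ((\<lambda>y. xi' y w) has_vector_derivative (complex_of_real (V x) - w) * xi x w) (at x within {0..pi})"
      using d0[OF xb] d1[OF xb] has_vector_derivative_within_subset pi_b by blast+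
    show "(W has_vector_derivative (w1 - w2) * (xi x w1 * xi x w2)) (at x within {0..pi})"
      unfolding W_def
      by (rule has_vector_derivative_eq_rhs[OF has_vector_derivative_diff[OF
            has_vector_derivative_mult[OF h(1) h(2)] has_vector_derivative_mult[OF h(2) h(1)]]])
         (simp add: algebra_simps)
  qed simp
  hence "((\<lambda>x. inverse (w1 - w2) * ((w1 - w2) * (xi x w1 * xi x w2))) has_integral
           (inverse (w1 - w2) * (W pi - W 0))) {0..pi}"
    by (rule has_integral_mult_right)
  moreover have "W 0 = 0" by (simp add: W_def init0 init1)
  moreover have "(\<lambda>x. inverse (w1 - w2) * ((w1 - w2) * (xi x w1 * xi x w2))) = (\<lambda>x. xi x w1 * xi x w2)"
    using ne by (auto simp: field_simps)
  ultimately show ?thesis by (simp add: W_def divide_inverse mult.commute)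
qed

lemma energy:
  fixes p q :: "real \<Rightarrow> real"
  assumes dp: "\<And>x. x\<in>{0..b} \<Longrightarrow> (p has_real_derivative q x) (at x within {0..b})"
    and dq: "\<And>x. x\<in>{0..b} \<Longrightarrow> (q has_real_derivative (V x - r) * p x) (at x within {0..b})"
    and mu: "\<mu> \<ge> 1" and al: "\<And>x. x\<in>{0..b} \<Longrightarrow> \<bar>V x - r + \<mu>\<bar> \<le> \<alpha>" and x: "x \<in> {0..b}"
  shows "q x ^ 2 + \<mu> * p x ^ 2 \<le> (q 0 ^ 2 + \<mu> * p 0 ^ 2) * exp (\<alpha> * x)"
    "(q 0 ^ 2 + \<mu> * p 0 ^ 2) * exp (-\<alpha> * x) \<le> q x ^ 2 + \<mu> * p x ^ 2"
proof -
  define E where "E x = q x ^ 2 + \<mu> * p x ^ 2" for x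
  define E' where "E' x = 2 * (p x * q x) * (V x - r + \<mu>)" for x
  have dE: "(E has_real_derivative E' x) (at x within {0..b})" if "x\<in>{0..b}" for x
    unfolding E_def E'_def
    by (rule DERIV_cong, (rule derivative_intros dp[OF that] dq[OF that])+) (simp add: algebra_simps)
  have bE: "\<bar>E' x\<bar> \<le> \<alpha> * E x" if "x\<in>{0..b}" for x
  proof -
    have "\<bar>E' x\<bar> = (2 * \<bar>p x * q x\<bar>) * \<bar>V x - r + \<mu>\<bar>" by (simp add: E'_def abs_mult)
    also have "\<dots> \<le> (p x ^ 2 + q x ^ 2) * \<alpha>"
      by (rule mult_mono[OF two_ab al[OF that]]) auto
    also have "\<dots> \<le> E x * \<alpha>"
    proof (rule mult_right_mono)
      show "p x ^ 2 + q x ^ 2 \<le> E x" unfolding E_def using mu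
        by (simp add: mult_le_cancel_right1 mult_right_mono[of 1 \<mu> "p x ^ 2", simplified])
      show "0 \<le> \<alpha>" using al[OF that] by linarith
    qed
    finally show ?thesis by (simp add: mult.commute)
  qed
  show "q x ^ 2 + \<mu> * p x ^ 2 \<le> (q 0 ^ 2 + \<mu> * p 0 ^ 2) * exp (\<alpha> * x)"
    using gronwall2(1)[of b E E' \<alpha> x] dE bE x unfolding E_def by blast
  show "(q 0 ^ 2 + \<mu> * p 0 ^ 2) * exp (-\<alpha> * x) \<le> q x ^ 2 + \<mu> * p x ^ 2"
    using gronwall2(2)[of b E E' \<alpha> x] dE bE x unfolding E_def by blast
qed

lemma real_sol:
  fixes r :: real
  assumes x: "x \<in> {0..b}"
  shows "Im (xi x (of_real r)) = 0" "Im (xi' x (of_real r)) = 0"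
proof -
  define p where "p y = Im (xi y (of_real r))" for y
  define q where "q y = Im (xi' y (of_real r))" for y
  have dp: "(p has_real_derivative q y) (at y within {0..b})" if "y\<in>{0..b}" for y
    unfolding p_def q_def by (rule has_field_derivative_Im[OF d0[OF that]])
  have dq: "(q has_real_derivative (V y - r) * p y) (at y within {0..b})" if "y\<in>{0..b}" for y
    unfolding p_def q_def using has_field_derivative_Im[OF d1[OF that, of "of_real r"]] by simp
  have al: "\<bar>V y - r + 1\<bar> \<le> L + \<bar>r\<bar> + 1" if "y\<in>{0..b}" for y using L(2)[OF that] by linarith
  have "q x ^ 2 + 1 * p x ^ 2 \<le> (q 0 ^ 2 + 1 * p 0 ^ 2) * exp ((L + \<bar>r\<bar> + 1) * x)"
    by (rule energy(1)[OF dp dq _ al x]) auto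
  moreover have "p 0 = 0" "q 0 = 0" by (simp_all add: p_def q_def init0 init1)
  ultimately have "q x ^ 2 + p x ^ 2 \<le> 0" by simp
  hence "p x = 0" by (smt (verit) zero_le_power2 power_eq_0_iff zero_less_power2)
  have "q x = 0" using \<open>q x ^ 2 + p x ^ 2 \<le> 0\<close> by (smt (verit) zero_le_power2 power_eq_0_iff zero_less_power2)
  thus "Im (xi x (of_real r)) = 0" "Im (xi' x (of_real r)) = 0" using \<open>p x = 0\<close> by (simp_all add: p_def q_def)
qed

end



context SL begin

definition u where "u r x = Re (xi x (complex_of_real r))"
definition up where "up r x = Re (xi' x (complex_of_real r))"
definition mu :: "real \<Rightarrow> real" where "mu r = max 1 r"
definition K where "K = exp ((2*L+2)*b)"
definition kr where "kr t = integral {0..pi} (\<lambda>x. u t x ^ 2)"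

lemma xi_real: "x\<in>{0..b} \<Longrightarrow> xi x (complex_of_real r) = complex_of_real (u r x)"
  using real_sol(1)[of x r] unfolding u_def by (simp add: complex_eq_iff)

lemma xi'_real: "x\<in>{0..b} \<Longrightarrow> xi' x (complex_of_real r) = complex_of_real (up r x)"
  using real_sol(2)[of x r] unfolding up_def by (simp add: complex_eq_iff)

lemma du: "x\<in>{0..b} \<Longrightarrow> (u r has_real_derivative up r x) (at x within {0..b})"
  unfolding u_def up_def by (rule has_field_derivative_Re[OF d0])

lemma dup: "x\<in>{0..b} \<Longrightarrow> (up r has_real_derivative (V x - r) * u r x) (at x within {0..b})"
  unfolding u_def up_def using has_field_derivative_Re[OF d1, of x "complex_of_real r"] by simp

lemma u0: "u r 0 = 1" "up r 0 = 0" by (simp_all add: u_def up_def init0 init1)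

lemma ucont: "continuous_on {0..b} (u r)" "continuous_on {0..b} (up r)"
  unfolding u_def[abs_def] up_def[abs_def]
  by (intro continuous_intros cont0 cont1)+

lemma ucont_pi: "continuous_on {0..pi} (u r)" "continuous_on {0..pi} (up r)"
  using ucont continuous_on_subset pi_b by blast+

lemma mu: "mu r \<ge> 1" "r \<le> mu r" by (auto simp: mu_def)

lemma energy_u:
  assumes x: "x\<in>{0..b}"
  shows "up r x ^ 2 + mu r * u r x ^ 2 \<le> mu r * exp ((L + \<bar>mu r - r\<bar>) * x)"
    "mu r * exp (-(L + \<bar>mu r - r\<bar>) * x) \<le> up r x ^ 2 + mu r * u r x ^ 2"
proof -
  have al: "\<bar>V y - r + mu r\<bar> \<le> L + \<bar>mu r - r\<bar>" if "y\<in>{0..b}" for y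
    using L(2)[OF that] by linarith
  show "up r x ^ 2 + mu r * u r x ^ 2 \<le> mu r * exp ((L + \<bar>mu r - r\<bar>) * x)"
    using energy(1)[of "u r" "up r" r "mu r" "L + \<bar>mu r - r\<bar>" x, OF du dup mu(1) al x] by (simp add: u0)
  show "mu r * exp (-(L + \<bar>mu r - r\<bar>) * x) \<le> up r x ^ 2 + mu r * u r x ^ 2"
    using energy(2)[of "u r" "up r" r "mu r" "L + \<bar>mu r - r\<bar>" x, OF du dup mu(1) al x] by (simp add: u0)
qed

lemma int_id:
  assumes t: "up t pi = 0"
  shows "integral {0..pi} (\<lambda>x. up t x ^ 2 + m * u t x ^ 2) = integral {0..pi} (\<lambda>x. (t - V x + m) * u t x ^ 2)"
proof -
  have "((\<lambda>x. up t x ^ 2 + (V x - t) * u t x ^ 2) has_integral (u t pi * up t pi - u t 0 * up t 0)) {0..pi}"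
  proof (rule fundamental_theorem_of_calculus)
    fix x assume x: "x \<in> {0..pi}"
    hence xb: "x \<in> {0..b}" using pi_b by auto
    have h1: "(u t has_real_derivative up t x) (at x within {0..pi})"
      using du[OF xb] DERIV_subset pi_b by blast
    have h2: "(up t has_real_derivative (V x - t) * u t x) (at x within {0..pi})"
      using dup[OF xb] DERIV_subset pi_b by blast
    have "((\<lambda>x. u t x * up t x) has_real_derivative (u t x * ((V x - t) * u t x) + up t x * up t x)) (at x within {0..pi})"
      by (rule DERIV_mult[OF h1 h2, THEN DERIV_cong]) simp
    thus "((\<lambda>x. u t x * up t x) has_vector_derivative up t x ^ 2 + (V x - t) * u t x ^ 2) (at x within {0..pi})"
      by (simp add: has_real_derivative_iff_has_vector_derivative[symmetric] power2_eq_square algebra_simps)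
  qed simp
  hence h0: "((\<lambda>x. up t x ^ 2 + (V x - t) * u t x ^ 2) has_integral 0) {0..pi}" using t u0 by simp
  have Vc': "continuous_on {0..pi} V" using Vc continuous_on_subset pi_b by blast
  have "((\<lambda>x. (t - V x + m) * u t x ^ 2) has_integral integral {0..pi} (\<lambda>x. (t - V x + m) * u t x ^ 2)) {0..pi}"
    by (rule integrable_integral, rule integrable_continuous_interval)
       (intro continuous_intros ucont_pi Vc')
  from has_integral_add[OF h0 this]
  have "((\<lambda>x. up t x ^ 2 + m * u t x ^ 2) has_integral integral {0..pi} (\<lambda>x. (t - V x + m) * u t x ^ 2)) {0..pi}"
    by (simp add: algebra_simps)
  thus ?thesis by (rule integral_unique)
qed

end



context SL begin

definition Sp where "Sp = {t::real. xi' pi (complex_of_real t) = 0}"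

lemma Sp_up: "t \<in> Sp \<Longrightarrow> up t pi = 0"
  using xi'_real[of pi t] pi_b unfolding Sp_def by auto

lemma Vc_pi: "continuous_on {0..pi} V" using Vc continuous_on_subset pi_b by blast

lemma intE_cont: "(\<lambda>x. up t x ^ 2 + m * u t x ^ 2) integrable_on {0..pi}"
  by (rule integrable_continuous_interval) (intro continuous_intros ucont_pi)

lemma int_u2: "(\<lambda>x. (t - V x + m) * u t x ^ 2) integrable_on {0..pi}"
  by (rule integrable_continuous_interval) (intro continuous_intros ucont_pi Vc_pi)

lemma u2_int: "(\<lambda>x. u t x ^ 2) integrable_on {0..pi}"
  by (rule integrable_continuous_interval) (intro continuous_intros ucont_pi)

lemma Sp_lower: assumes t: "t \<in> Sp" shows "t > -L-1"
proof (rule ccontr)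
  assume "\<not> t > -L-1"
  hence tl: "t \<le> -L-1" by simp
  have m1: "mu t = 1" using tl L(1) by (simp add: mu_def)
  define al where "al = L + \<bar>mu t - t\<bar>"
  have al0: "al \<ge> 0" using L(1) by (simp add: al_def)
  have low: "exp (-al * pi) \<le> up t x ^ 2 + 1 * u t x ^ 2" if x: "x\<in>{0..pi}" for x
  proof -
    have xb: "x\<in>{0..b}" using x pi_b by auto
    have "exp (-al * pi) \<le> exp (-al * x)" using x al0 by (auto intro: mult_left_mono)
    also have "\<dots> \<le> up t x ^ 2 + 1 * u t x ^ 2" using energy_u(2)[OF xb, of t] m1 by (simp add: al_def)
    finally show ?thesis .
  qed
  have "integral {0..pi} (\<lambda>x. exp (-al * pi)) \<le> integral {0..pi} (\<lambda>x. up t x ^ 2 + 1 * u t x ^ 2)"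
    by (rule integral_le[OF _ intE_cont low]) (rule integrable_const_ivl)
  also have "\<dots> = integral {0..pi} (\<lambda>x. (t - V x + 1) * u t x ^ 2)" by (rule int_id[OF Sp_up[OF t]])
  also have "\<dots> \<le> integral {0..pi} (\<lambda>x. 0)"
  proof (rule integral_le[OF int_u2])
    fix x assume x: "x\<in>{0..pi}"
    hence "\<bar>V x\<bar> \<le> L" using L(2) pi_b by auto
    hence "t - V x + 1 \<le> 0" using tl by linarith
    thus "(t - V x + 1) * u t x ^ 2 \<le> 0" by (simp add: mult_nonpos_nonneg)
  qed (rule integrable_0)
  finally have "pi * exp (-al * pi) \<le> 0" by simp
  moreover have "pi * exp (-al * pi) > 0" by simp
  ultimately show False by linarith
qed

lemma K1: "K \<ge> 1"
proof -
  have "0 \<le> (2*L+2)*b" using L(1) b pi_gt_zero by (intro mult_nonneg_nonneg) linarith+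
  thus ?thesis unfolding K_def by simp
qed

lemma E_bounds:
  assumes t: "t > -L-1" and x: "x\<in>{0..b}"
  shows "up t x ^ 2 + mu t * u t x ^ 2 \<le> mu t * K" "mu t / K \<le> up t x ^ 2 + mu t * u t x ^ 2"
proof -
  define al where "al = L + \<bar>mu t - t\<bar>"
  have al0: "0 \<le> al" using L(1) by (simp add: al_def)
  have al2: "al \<le> 2*L+2" unfolding al_def mu_def using t L(1) by auto
  have "al * x \<le> (2*L+2) * b" using x al0 al2 L(1) by (auto intro: mult_mono)
  hence ex: "exp (al * x) \<le> K" unfolding K_def by simp
  have m: "mu t > 0" using mu(1)[of t] by simp
  have "mu t * exp (al * x) \<le> mu t * K" using ex m by simp
  thus "up t x ^ 2 + mu t * u t x ^ 2 \<le> mu t * K"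
    using energy_u(1)[OF x, of t] unfolding al_def by linarith
  have "exp (-al * x) = inverse (exp (al * x))" by (simp add: exp_minus)
  also have "\<dots> \<ge> inverse K" using ex by (simp add: le_imp_inverse_le)
  finally have "mu t / K \<le> mu t * exp (-al * x)" using m by (simp add: divide_inverse)
  thus "mu t / K \<le> up t x ^ 2 + mu t * u t x ^ 2"
    using energy_u(2)[OF x, of t] unfolding al_def by simp
qed

lemma u_bound: assumes t: "t > -L-1" and x: "x\<in>{0..b}" shows "u t x ^ 2 \<le> K"
proof -
  have "mu t * u t x ^ 2 \<le> mu t * K" using E_bounds(1)[OF t x] by (smt (verit) zero_le_power2)
  thus ?thesis using mu(1)[of t] by simp
qed

lemma up_bound: assumes t: "t > -L-1" and x: "x\<in>{0..b}" shows "up t x ^ 2 \<le> mu t * K"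
proof -
  have "0 \<le> mu t * u t x ^ 2" using mu(1)[of t] by simp
  thus ?thesis using E_bounds(1)[OF t x] by linarith
qed

definition k0 where "k0 = pi / (K * (2 + L))"

lemma k0_pos: "k0 > 0" unfolding k0_def using K1 L(1) by simp

lemma kr_bounds:
  assumes t: "t \<in> Sp" shows "k0 \<le> kr t" "kr t \<le> pi * K"
proof -
  have tl: "t > -L-1" by (rule Sp_lower[OF t])
  have m: "mu t \<ge> 1" "t \<le> mu t" by (rule mu)+
  have "integral {0..pi} (\<lambda>x. mu t / K) \<le> integral {0..pi} (\<lambda>x. up t x ^ 2 + mu t * u t x ^ 2)"
    by (rule integral_le[OF _ intE_cont]) (use E_bounds(2)[OF tl] pi_b in auto)
  also have "\<dots> = integral {0..pi} (\<lambda>x. (t - V x + mu t) * u t x ^ 2)" by (rule int_id[OF Sp_up[OF t]])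
  also have "\<dots> \<le> integral {0..pi} (\<lambda>x. (2 * mu t + L) * u t x ^ 2)"
  proof (rule integral_le[OF int_u2])
    show "(\<lambda>x. (2 * mu t + L) * u t x ^ 2) integrable_on {0..pi}"
      by (rule integrable_continuous_interval) (intro continuous_intros ucont_pi)
  next
    fix x assume x: "x\<in>{0..pi}"
    hence "\<bar>V x\<bar> \<le> L" using L(2) pi_b by auto
    hence "t - V x + mu t \<le> 2 * mu t + L" using m by linarith
    thus "(t - V x + mu t) * u t x ^ 2 \<le> (2 * mu t + L) * u t x ^ 2" by (simp add: mult_right_mono)
  qed
  also have "\<dots> = (2 * mu t + L) * kr t" by (simp add: kr_def)
  finally have h: "pi * (mu t / K) \<le> (2 * mu t + L) * kr t" by simp
  have kr0: "kr t \<ge> 0" unfolding kr_def by (rule integral_nonneg[OF u2_int]) simp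
  have Kp: "K > 0" using K1 by simp
  have h2: "pi * mu t \<le> K * ((2 * mu t + L) * kr t)" using h Kp by (simp add: field_simps)
  have "(2 * mu t + L) \<le> mu t * (2 + L)" using m L(1) mult_right_mono[of 1 "mu t" L] by (simp add: algebra_simps)
  hence "(2 * mu t + L) * kr t \<le> (mu t * (2 + L)) * kr t" using kr0 by (rule mult_right_mono)
  hence "K * ((2 * mu t + L) * kr t) \<le> K * ((mu t * (2 + L)) * kr t)"
    using Kp by simp
  hence "pi * mu t \<le> mu t * (K * (2 + L) * kr t)" using h2 by (simp add: ac_simps)
  hence "pi \<le> K * (2 + L) * kr t" using m by simp
  moreover have "K * (2 + L) > 0" using Kp L(1) by simp
  ultimately show "k0 \<le> kr t" unfolding k0_def by (simp add: divide_le_eq mult.commute)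
  have "kr t \<le> integral {0..pi} (\<lambda>x. K)"
    unfolding kr_def by (rule integral_le[OF u2_int]) (use u_bound[OF tl] pi_b in auto)
  thus "kr t \<le> pi * K" by simp
qed

end



context SL begin

definition ip where "ip f g = integral {0..pi} (\<lambda>x. f x * g x)"

lemma ci: "continuous_on {0..pi} h \<Longrightarrow> (h::real\<Rightarrow>real) integrable_on {0..pi}"
  by (rule integrable_continuous_interval)

lemma orth:
  assumes s: "s \<in> Sp" and t: "t \<in> Sp" and st: "s \<noteq> t"
  shows "ip (u s) (u t) = 0"
proof -
  have ne: "complex_of_real s \<noteq> complex_of_real t" using st by simp
  have "((\<lambda>x. xi x (of_real s) * xi x (of_real t)) has_integral 0) {0..pi}"
    using lagrange[OF ne] s t unfolding Sp_def by simp
  from has_integral_linear[OF this bounded_linear_Re]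
  have "((\<lambda>x. Re (xi x (of_real s) * xi x (of_real t))) has_integral 0) {0..pi}" by (simp add: o_def)
  moreover have "Re (xi x (of_real s) * xi x (of_real t)) = u s x * u t x" if x: "x\<in>{0..pi}" for x
  proof -
    have xb: "x \<in> {0..b}" using x pi_b by auto
    show ?thesis using xi_real[OF xb, of s] xi_real[OF xb, of t] by simp
  qed
  ultimately have "((\<lambda>x. u s x * u t x) has_integral 0) {0..pi}"
    using has_integral_cong[of "{0..pi}" "\<lambda>x. Re (xi x (of_real s) * xi x (of_real t))" "\<lambda>x. u s x * u t x" 0]
    by simp
  thus ?thesis unfolding ip_def by (rule integral_unique)
qed

lemma kr_ip: "kr t = ip (u t) (u t)" by (simp add: kr_def ip_def power2_eq_square)

lemma kr_pos: "t \<in> Sp \<Longrightarrow> kr t > 0" using kr_bounds(1) k0_pos by fastforce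

lemma bessel:
  assumes F: "finite F" "F \<subseteq> Sp" and fc: "continuous_on {0..pi} f"
  shows "(\<Sum>t\<in>F. (ip f (u t))^2 / kr t) \<le> ip f f"
proof -
  define a where "a t = ip f (u t) / kr t" for t
  define P where "P x = (\<Sum>t\<in>F. a t * u t x)" for x
  have uc: "continuous_on {0..pi} (u t)" for t by (rule ucont_pi)
  have Pc: "continuous_on {0..pi} P" unfolding P_def by (intro continuous_intros uc)
  have "0 \<le> integral {0..pi} (\<lambda>x. (f x - P x)^2)"
    by (rule integral_nonneg) (intro ci continuous_intros fc Pc, simp)
  also have "integral {0..pi} (\<lambda>x. (f x - P x)^2) =
       integral {0..pi} (\<lambda>x. f x * f x) - 2 * integral {0..pi} (\<lambda>x. f x * P x) + integral {0..pi} (\<lambda>x. P x * P x)"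
  proof -
    have "(\<lambda>x. (f x - P x)^2) = (\<lambda>x. (f x * f x - 2 * (f x * P x)) + P x * P x)"
      by (auto simp: power2_eq_square algebra_simps)
    moreover have "integral {0..pi} (\<lambda>x. (f x * f x - 2 * (f x * P x)) + P x * P x) =
       integral {0..pi} (\<lambda>x. f x * f x - 2 * (f x * P x)) + integral {0..pi} (\<lambda>x. P x * P x)"
      by (rule integral_add) (intro ci continuous_intros fc Pc)+
    moreover have "integral {0..pi} (\<lambda>x. f x * f x - 2 * (f x * P x)) =
       integral {0..pi} (\<lambda>x. f x * f x) - integral {0..pi} (\<lambda>x. 2 * (f x * P x))"
      by (rule integral_diff) (intro ci continuous_intros fc Pc)+
    moreover have "integral {0..pi} (\<lambda>x. 2 * (f x * P x)) = 2 * integral {0..pi} (\<lambda>x. f x * P x)"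
      by simp
    ultimately show ?thesis by simp
  qed
  also have "integral {0..pi} (\<lambda>x. f x * P x) = (\<Sum>t\<in>F. a t * ip f (u t))"
  proof -
    have "integral {0..pi} (\<lambda>x. f x * P x) = integral {0..pi} (\<lambda>x. \<Sum>t\<in>F. a t * (f x * u t x))"
      unfolding P_def by (simp add: sum_distrib_left algebra_simps)
    also have "\<dots> = (\<Sum>t\<in>F. integral {0..pi} (\<lambda>x. a t * (f x * u t x)))"
      by (rule integral_sum[OF F(1)]) (intro ci continuous_intros fc uc)
    also have "\<dots> = (\<Sum>t\<in>F. a t * ip f (u t))" by (simp add: ip_def)
    finally show ?thesis .
  qed
  also have "integral {0..pi} (\<lambda>x. P x * P x) = (\<Sum>t\<in>F. a t * a t * kr t)"
  proof -
    have "integral {0..pi} (\<lambda>x. P x * P x) =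
        integral {0..pi} (\<lambda>x. \<Sum>t\<in>F. \<Sum>s\<in>F. a t * a s * (u t x * u s x))"
      unfolding P_def by (simp add: sum_product algebra_simps)
    also have "\<dots> = (\<Sum>t\<in>F. integral {0..pi} (\<lambda>x. \<Sum>s\<in>F. a t * a s * (u t x * u s x)))"
      by (rule integral_sum[OF F(1)]) (intro ci continuous_intros uc)
    also have "\<dots> = (\<Sum>t\<in>F. \<Sum>s\<in>F. a t * a s * ip (u t) (u s))"
    proof (rule sum.cong[OF refl])
      fix t assume "t \<in> F"
      have "integral {0..pi} (\<lambda>x. \<Sum>s\<in>F. a t * a s * (u t x * u s x)) =
         (\<Sum>s\<in>F. integral {0..pi} (\<lambda>x. a t * a s * (u t x * u s x)))"
        by (rule integral_sum[OF F(1)]) (intro ci continuous_intros uc)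
      thus "integral {0..pi} (\<lambda>x. \<Sum>s\<in>F. a t * a s * (u t x * u s x)) = (\<Sum>s\<in>F. a t * a s * ip (u t) (u s))"
        by (simp add: ip_def)
    qed
    also have "\<dots> = (\<Sum>t\<in>F. a t * a t * kr t)"
    proof (rule sum.cong[OF refl])
      fix t assume t: "t \<in> F"
      have "(\<Sum>s\<in>F. a t * a s * ip (u t) (u s)) = a t * a t * ip (u t) (u t) + (\<Sum>s\<in>F - {t}. a t * a s * ip (u t) (u s))"
        by (rule sum.remove[OF F(1) t])
      also have "(\<Sum>s\<in>F - {t}. a t * a s * ip (u t) (u s)) = 0"
        by (rule sum.neutral) (use orth F(2) t in auto)
      finally show "(\<Sum>s\<in>F. a t * a s * ip (u t) (u s)) = a t * a t * kr t" by (simp add: kr_ip)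
    qed
    finally show ?thesis .
  qed
  finally have h: "0 \<le> ip f f - 2 * (\<Sum>t\<in>F. a t * ip f (u t)) + (\<Sum>t\<in>F. a t * a t * kr t)"
    by (simp add: ip_def)
  have e1: "a t * ip f (u t) = (ip f (u t))^2 / kr t" for t by (simp add: a_def power2_eq_square)
  have e2: "t \<in> F \<Longrightarrow> a t * a t * kr t = (ip f (u t))^2 / kr t" for t
    using kr_pos[of t] F(2) by (auto simp: a_def power2_eq_square field_simps)
  have "(\<Sum>t\<in>F. a t * a t * kr t) = (\<Sum>t\<in>F. (ip f (u t))^2 / kr t)" using e2 by (rule sum.cong[OF refl])
  moreover have "(\<Sum>t\<in>F. a t * ip f (u t)) = (\<Sum>t\<in>F. (ip f (u t))^2 / kr t)" using e1 by simp
  ultimately show ?thesis using h by simp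
qed

end



lemma nat_ceil: assumes "real n \<le> x" shows "n \<le> nat \<lceil>x\<rceil>"
proof -
  have "real n \<le> real_of_int \<lceil>x\<rceil>" using assms le_of_int_ceiling order_trans by blast
  hence "int n \<le> \<lceil>x\<rceil>" by linarith
  thus ?thesis by (simp add: le_nat_iff)
qed

lemma int_hat:
  assumes h: "0 < h" "h \<le> pi"
  shows "integral {0..pi} (\<lambda>x. max 0 (h - x)) = h^2/2"
proof -
  have fi: "(\<lambda>x. max 0 (h - x)) integrable_on {0..pi}"
    by (rule integrable_continuous_interval) (intro continuous_intros)
  have "integral {0..h} (\<lambda>x. max 0 (h - x)) + integral {h..pi} (\<lambda>x. max 0 (h - x)) =
        integral {0..pi} (\<lambda>x. max (0::real) (h - x))"
    by (rule Henstock_Kurzweil_Integration.integral_combine[OF _ h(2) fi]) (use h in auto)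
  moreover have "integral {h..pi} (\<lambda>x. max 0 (h - x)) = integral {h..pi} (\<lambda>x. 0::real)"
    by (rule integral_cong) auto
  moreover have "integral {0..h} (\<lambda>x. max 0 (h - x)) = integral {0..h} (\<lambda>x. h - x)"
    by (rule integral_cong) auto
  moreover have "((\<lambda>x. h - x) has_integral ((h*h - h^2/2) - (h*0 - 0^2/2))) {0..h}"
  proof (rule fundamental_theorem_of_calculus)
    fix x assume "x \<in> {0..h}"
    have "((\<lambda>x. h*x - x^2/2) has_real_derivative (h - x)) (at x within {0..h})"
      by (auto intro!: derivative_eq_intros)
    thus "((\<lambda>x. h*x - x^2/2) has_vector_derivative (h - x)) (at x within {0..h})"
      by (simp add: has_real_derivative_iff_has_vector_derivative)
  qed (use h in auto)
  hence "integral {0..h} (\<lambda>x. h - x) = h^2/2" by (simp add: integral_unique power2_eq_square)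
  ultimately show ?thesis by simp
qed

context SL begin

lemma u_near0:
  assumes t: "t > -L-1" and x: "x\<in>{0..b}"
  shows "\<bar>u t x - 1\<bar> \<le> sqrt (mu t * K) * x"
proof -
  have "\<exists>z\<in>{0..x}. u t x - u t 0 = (\<lambda>h. up t z * h) (x - 0)"
  proof (rule mvt_very_simple)
    fix z assume z: "0 \<le> z" "z \<le> x"
    hence zb: "z \<in> {0..b}" using x by auto
    have "(u t has_real_derivative up t z) (at z within {0..x})"
      by (rule DERIV_subset[OF du[OF zb]]) (use x in auto)
    thus "(u t has_derivative (\<lambda>h. up t z * h)) (at z within {0..x})"
      by (simp add: has_field_derivative_def)
  qed (use x in auto)
  then obtain z where z: "z\<in>{0..x}" "u t x - u t 0 = up t z * x" by auto
  have zb: "z \<in> {0..b}" using z x by auto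
  have "\<bar>up t z\<bar> \<le> sqrt (mu t * K)"
    using real_sqrt_le_mono[OF up_bound[OF t zb]] by simp
  hence "\<bar>up t z\<bar> * x \<le> sqrt (mu t * K) * x" using x by (simp add: mult_right_mono)
  thus ?thesis using z u0 x by (simp add: abs_mult)
qed

lemma count_bound:
  assumes T: "T \<ge> 1" and G: "finite G" "G \<subseteq> Sp" "\<forall>t\<in>G. t \<le> T"
  shows "real (card G) \<le> 16*pi*K* sqrt (T*K)"
proof -
  define c where "c = sqrt (T*K)"
  have TK: "1 \<le> T*K" using mult_mono[of 1 T 1 K] T K1 by simp
  have c1: "c \<ge> 1" unfolding c_def using TK by simp
  define h where "h = 1/(2*c)"
  have h0: "0 < h" "h \<le> 1/2" using c1 by (auto simp: h_def field_simps)
  have hpi: "h \<le> pi" using h0 pi_gt3 by linarith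
  define f where "f x = max 0 (h - x)" for x
  have fc: "continuous_on {0..pi} f" unfolding f_def by (intro continuous_intros)
  define I where "I = integral {0..pi} f"
  have I: "I = h^2/2" unfolding I_def f_def by (rule int_hat[OF h0(1) hpi])
  have Ipos: "I > 0" unfolding I using h0 by simp
  have ipl: "I/2 \<le> ip f (u t)" if t: "t \<in> G" for t
  proof -
    have tl: "t > -L-1" using Sp_lower t G by auto
    have mt: "mu t \<le> T" using t G T by (auto simp: mu_def)
    have "I/2 = integral {0..pi} (\<lambda>x. f x * (1/2))" by (simp add: I_def)
    also have "\<dots> \<le> ip f (u t)" unfolding ip_def
    proof (rule integral_le)
      show "(\<lambda>x. f x * (1/2)) integrable_on {0..pi}" by (intro ci continuous_intros fc)
      show "(\<lambda>x. f x * u t x) integrable_on {0..pi}" by (intro ci continuous_intros fc ucont_pi)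
    next
      fix x assume x: "x \<in> {0..pi}"
      show "f x * (1/2) \<le> f x * u t x"
      proof (cases "x \<le> h")
        case True
        have xb: "x \<in> {0..b}" using x pi_b by auto
        have "sqrt (mu t * K) \<le> c" unfolding c_def using mt K1 by (simp add: mult_right_mono)
        hence "sqrt (mu t * K) * x \<le> c * h" using x True h0 c1
          by (intro mult_mono) auto
        also have "c * h = 1/2" using c1 by (simp add: h_def)
        finally have "u t x \<ge> 1/2" using u_near0[OF tl xb] by linarith
        thus ?thesis by (intro mult_left_mono) (auto simp: f_def)
      next
        case False thus ?thesis by (simp add: f_def)
      qed
    qed
    finally show ?thesis .
  qed
  have tm: "(I/2)^2 / (pi*K) \<le> (ip f (u t))^2 / kr t" if t: "t \<in> G" for t
  proof -
    have tS: "t \<in> Sp" using t G by auto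
    have "(I/2)^2 \<le> (ip f (u t))^2" using ipl[OF t] Ipos by (intro power_mono) auto
    moreover have "0 < kr t" "kr t \<le> pi * K" using kr_pos[OF tS] kr_bounds(2)[OF tS] by auto
    ultimately show ?thesis by (intro frac_le) auto
  qed
  have "real (card G) * ((I/2)^2 / (pi*K)) \<le> (\<Sum>t\<in>G. (ip f (u t))^2 / kr t)"
    by (rule sum_bounded_below) (rule tm)
  also have "\<dots> \<le> ip f f" by (rule bessel[OF G(1) G(2) fc])
  also have "\<dots> \<le> integral {0..pi} (\<lambda>x. h * f x)" unfolding ip_def
  proof (rule integral_le)
    show "(\<lambda>x. f x * f x) integrable_on {0..pi}" by (intro ci continuous_intros fc)
    show "(\<lambda>x. h * f x) integrable_on {0..pi}" by (intro ci continuous_intros fc)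
  next
    fix x assume x: "x \<in> {0..pi}"
    have "0 \<le> f x" "f x \<le> h" using h0 x by (auto simp: f_def)
    thus "f x * f x \<le> h * f x" by (intro mult_right_mono) auto
  qed
  also have "\<dots> = h * I" by (simp add: I_def)
  finally have main: "real (card G) * ((I/2)^2 / (pi*K)) \<le> h * I" .
  have Kp: "pi * K > 0" using K1 by simp
  define n where "n = real (card G)"
  have "n * (I/2)^2 / (pi*K) \<le> h * I" using main unfolding n_def by simp
  hence "n * (I/2)^2 \<le> h * I * (pi*K)" using Kp by (simp add: pos_divide_le_eq)
  hence "(n * (I/2)) * (I/2) \<le> (2 * h * pi * K) * (I/2)" by (simp add: power2_eq_square ac_simps)
  hence "n * (I/2) \<le> 2 * h * pi * K" using Ipos by (simp add: mult_le_cancel_right)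
  hence "(n * h) * h \<le> (8 * pi * K) * h" unfolding I by (simp add: power2_eq_square ac_simps)
  hence "n * h \<le> 8 * pi * K" using h0 by (simp add: mult_le_cancel_right)
  hence "n \<le> 8 * pi * K / h" using h0 by (simp add: pos_le_divide_eq)
  also have "8 * pi * K / h = 16 * pi * K * c" by (simp add: h_def)
  finally have "n \<le> 16 * pi * K * c" .
  thus ?thesis by (simp add: c_def n_def)
qed

lemma Sp_fin: "finite {t\<in>Sp. t \<le> T}"
proof -
  define T' where "T' = max 1 T"
  have "finite {t\<in>Sp. t \<le> T} \<and> card {t\<in>Sp. t \<le> T} \<le> nat \<lceil>16*pi*K* sqrt (T'*K)\<rceil>"
  proof (rule finite_if_finite_subsets_card_bdd)
    fix G assume "G \<subseteq> {t\<in>Sp. t \<le> T}" "finite G"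
    hence "real (card G) \<le> 16*pi*K* sqrt (T'*K)"
      by (intro count_bound) (auto simp: T'_def)
    thus "card G \<le> nat \<lceil>16*pi*K* sqrt (T'*K)\<rceil>" by (rule nat_ceil)
  qed
  thus ?thesis by blast
qed

end

lemma dyadic:
  fixes S :: "real set"
  assumes S2: "S \<subseteq> {2<..}" and C: "C \<ge> 0"
    and cnt: "\<And>T G. T \<ge> 1 \<Longrightarrow> finite G \<Longrightarrow> G \<subseteq> S \<Longrightarrow> (\<forall>t\<in>G. t \<le> T) \<Longrightarrow> real (card G) \<le> C * sqrt T"
  shows "(\<lambda>t. 1/t) summable_on S"
proof (rule nonneg_bdd_above_summable_on)
  show "\<And>x. x \<in> S \<Longrightarrow> 0 \<le> 1 / x" using S2 by auto
  define q :: real where "q = 1 / sqrt 2"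
  have q: "0 \<le> q" "q < 1" by (auto simp: q_def)
  define B where "B = C * sqrt 2 / (1 - q)"
  have step: "(\<Sum>t\<in>{t\<in>F. t \<le> 2^N}. 1/t) \<le> C * sqrt 2 * (\<Sum>j<N. q^j)"
    if F: "finite F" "F \<subseteq> S" for F N
  proof (induction N)
    case 0
    have "\<forall>t\<in>F. t > 2" using F S2 by auto
    hence "\<forall>t\<in>F. \<not> t \<le> 1" by auto
    hence e: "{t\<in>F. t \<le> (2::real)^0} = {}" by simp
    show ?case unfolding e by simp
  next
    case (Suc N)
    define A where "A = {t\<in>F. t \<le> 2^N}"
    define G where "G = {t\<in>F. 2^N < t \<and> t \<le> 2^Suc N}"
    have le: "(2::real)^N \<le> 2^Suc N" by simp
    have un: "{t\<in>F. t \<le> 2^Suc N} = A \<union> G"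
    proof (rule set_eqI)
      fix t :: real
      have "t \<le> 2^N \<Longrightarrow> t \<le> 2^Suc N" using le by linarith
      thus "t \<in> {t\<in>F. t \<le> 2^Suc N} \<longleftrightarrow> t \<in> A \<union> G"
        unfolding A_def G_def by (auto simp del: power_Suc)
    qed
    have fin: "finite A" "finite G" using F unfolding A_def G_def by auto
    have dis: "A \<inter> G = {}" unfolding A_def G_def by auto
    have p1: "(1::real) \<le> 2 * 2^N" using one_le_power[of "2::real" N] by linarith
    have "(\<Sum>t\<in>G. 1/t) \<le> (\<Sum>t\<in>G. 1/2^N)"
      by (rule sum_mono) (auto simp: G_def intro!: divide_left_mono)
    also have "\<dots> = real (card G) / 2^N" by simp
    also have "\<dots> \<le> C * sqrt (2^Suc N) / 2^N"
      by (rule divide_right_mono[OF cnt]) (use fin F p1 in \<open>auto simp: G_def\<close>)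
    also have "C * sqrt (2^Suc N) / 2^N = C * sqrt 2 * q^N"
    proof -
      define s where "s = sqrt 2 ^ N"
      have s0: "s > 0" unfolding s_def by simp
      have e1: "sqrt (2^Suc N) = sqrt 2 * s" unfolding s_def by (simp add: real_sqrt_power real_sqrt_mult)
      have e2: "(2::real)^N = s * s" unfolding s_def by (simp add: power_mult_distrib[symmetric])
      have e3: "q^N = 1 / s" unfolding s_def q_def by (simp add: power_one_over)
      have "C * (sqrt 2 * s) / (s * s) = C * sqrt 2 * (1 / s)" using s0 by (simp add: field_simps)
      thus ?thesis unfolding e1 e2 e3 .
    qed
    finally have g: "(\<Sum>t\<in>G. 1/t) \<le> C * sqrt 2 * q^N" .
    have "(\<Sum>t\<in>{t\<in>F. t \<le> 2^Suc N}. 1/t) = (\<Sum>t\<in>A. 1/t) + (\<Sum>t\<in>G. 1/t)"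
      unfolding un by (rule sum.union_disjoint[OF fin dis])
    also have "\<dots> \<le> C * sqrt 2 * (\<Sum>j<N. q^j) + C * sqrt 2 * q^N"
      using Suc.IH g unfolding A_def by linarith
    also have "\<dots> = C * sqrt 2 * (\<Sum>j<Suc N. q^j)" by (simp add: algebra_simps)
    finally show ?case .
  qed
  have geo: "(\<Sum>j<N. q^j) \<le> 1 / (1 - q)" for N
  proof -
    have "(\<Sum>j<N. q^j) = (1 - q^N) / (1 - q)" using q by (simp add: sum_gp_strict)
    also have "\<dots> \<le> 1 / (1 - q)" using q by (intro divide_right_mono) auto
    finally show ?thesis .
  qed
  show "bdd_above (sum (\<lambda>t. 1/t) ` {F. F \<subseteq> S \<and> finite F})"
  proof (rule bdd_aboveI2)
    fix F assume "F \<in> {F. F \<subseteq> S \<and> finite F}"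
    hence F: "finite F" "F \<subseteq> S" by auto
    obtain N where N: "\<forall>t\<in>F. t \<le> 2^N"
    proof (cases "F = {}")
      case True
      have "\<forall>t\<in>F. t \<le> 2^0" using True by simp
      thus ?thesis by (rule that)
    next
      case False
      have "\<exists>N. Max F < (2::real)^N" by (rule real_arch_pow) simp
      then obtain N where N': "Max F < (2::real)^N" by (elim exE)
      have "\<forall>t\<in>F. t \<le> 2^N"
      proof
        fix t assume "t \<in> F"
        hence "t \<le> Max F" by (rule Max_ge[OF F(1)])
        thus "t \<le> 2^N" using N' by linarith
      qed
      thus ?thesis by (rule that)
    qed
    have "{t\<in>F. t \<le> 2^N} = F" using N by auto
    hence "(\<Sum>t\<in>F. 1/t) \<le> C * sqrt 2 * (\<Sum>j<N. q^j)" using step[OF F, of N] by (simp only:)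
    also have "\<dots> \<le> C * sqrt 2 * (1 / (1 - q))"
      by (rule mult_left_mono[OF geo]) (use C in simp)
    finally show "(\<Sum>t\<in>F. 1/t) \<le> C * sqrt 2 * (1 / (1 - q))" .
  qed
qed




context SL begin

lemma k_tt: "k_pi xi t (complex_of_real t) = complex_of_real (kr t)"
proof -
  have "k_pi xi t (complex_of_real t) = integral {0..pi} (\<lambda>x. complex_of_real (u t x ^ 2))"
    unfolding k_pi_def
  proof (rule integral_cong)
    fix x assume "x \<in> {0..pi}"
    hence xb: "x \<in> {0..b}" using pi_b by auto
    show "xi x (complex_of_real t) * xi x (complex_of_real t) = complex_of_real (u t x ^ 2)"
      using xi_real[OF xb, of t] by (simp add: power2_eq_square)
  qed
  also have "\<dots> = complex_of_real (kr t)"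
    unfolding kr_def by (rule integral_unique[OF has_integral_of_real[OF integrable_integral[OF u2_int]]])
  finally show ?thesis .
qed

lemma k_tz:
  assumes t: "t \<in> Sp" and ne: "complex_of_real t \<noteq> z"
  shows "k_pi xi t z = xi pi (complex_of_real t) * xi' pi z / (complex_of_real t - z)"
proof -
  have "k_pi xi t z = (xi pi (complex_of_real t) * xi' pi z - xi' pi (complex_of_real t) * xi pi z) / (complex_of_real t - z)"
    unfolding k_pi_def by (rule integral_unique[OF lagrange[OF ne]])
  thus ?thesis using t unfolding Sp_def by simp
qed

lemma abs_u: assumes t: "t > -L-1" and x: "x\<in>{0..b}" shows "\<bar>u t x\<bar> \<le> sqrt K"
  using real_sqrt_le_mono[OF u_bound[OF t x]] by simp

definition Mb where "Mb z t = (if complex_of_real t = z then sqrt K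
    else K * cmod (xi' pi z) / (k0 * cmod (complex_of_real t - z)))"

lemma term_bound:
  assumes t: "t \<in> Sp" and x: "x \<in> {0..b}"
  shows "norm (k_pi xi t z / k_pi xi t (complex_of_real t) * xi x (complex_of_real t)) \<le> Mb z t"
proof -
  have tl: "t > -L-1" by (rule Sp_lower[OF t])
  have krp: "kr t > 0" by (rule kr_pos[OF t])
  have pb: "pi \<in> {0..b}" using pi_b by auto
  have ux: "\<bar>u t x\<bar> \<le> sqrt K" by (rule abs_u[OF tl x])
  have upi: "\<bar>u t pi\<bar> \<le> sqrt K" by (rule abs_u[OF tl pb])
  show ?thesis
  proof (cases "complex_of_real t = z")
    case True
    have "k_pi xi t z / k_pi xi t (complex_of_real t) = 1"
      unfolding True[symmetric] k_tt using krp by simp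
    moreover have "Mb z t = sqrt K" unfolding Mb_def using True by simp
    moreover have "norm (xi x (complex_of_real t)) = \<bar>u t x\<bar>" unfolding xi_real[OF x] by simp
    ultimately show ?thesis using ux by simp
  next
    case False
    define d where "d = cmod (complex_of_real t - z)"
    have d0: "d > 0" using False by (simp add: d_def)
    define Z where "Z = cmod (xi' pi z)"
    have Z0: "Z \<ge> 0" by (simp add: Z_def)
    have "norm (k_pi xi t z / k_pi xi t (complex_of_real t) * xi x (complex_of_real t)) =
          \<bar>u t pi\<bar> * Z / d / kr t * \<bar>u t x\<bar>"
      unfolding k_tz[OF t False] k_tt xi_real[OF x] xi_real[OF pb]
      by (simp only: norm_mult norm_divide norm_of_real abs_of_pos[OF krp] d_def[symmetric] Z_def[symmetric])
    also have "\<dots> = (\<bar>u t pi\<bar> * \<bar>u t x\<bar>) * (Z / (d * kr t))"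
      using d0 krp by (simp add: field_simps)
    also have "\<dots> \<le> (sqrt K * sqrt K) * (Z / (d * k0))"
    proof (rule mult_mono)
      show "\<bar>u t pi\<bar> * \<bar>u t x\<bar> \<le> sqrt K * sqrt K"
        by (rule mult_mono[OF upi ux]) (use K1 in simp_all)
      have a: "d * k0 \<le> d * kr t"
        by (rule mult_left_mono[OF kr_bounds(1)[OF t]]) (use d0 in linarith)
      have bb: "0 < d * kr t * (d * k0)"
        by (rule mult_pos_pos[OF mult_pos_pos[OF d0 krp] mult_pos_pos[OF d0 k0_pos]])
      show "Z / (d * kr t) \<le> Z / (d * k0)" by (rule divide_left_mono[OF a Z0 bb])
      show "0 \<le> sqrt K * sqrt K" by simp
      have dk: "0 < d * kr t" by (rule mult_pos_pos[OF d0 krp])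
      show "0 \<le> Z / (d * kr t)" using dk Z0 by simp
    qed
    also have "sqrt K * sqrt K = K" using K1 by simp
    also have "K * (Z / (d * k0)) = Mb z t"
      unfolding Mb_def using False by (simp add: d_def Z_def mult.commute)
    finally show ?thesis .
  qed
qed

end


context SL begin
lemma Mb_nonneg: "Mb z t \<ge> 0" unfolding Mb_def using K1 k0_pos by auto

lemma inv_summable: "(\<lambda>t. 1/t) summable_on {t\<in>Sp. 2 * cmod z + 2 < t}"
proof -
  define B where "B = {t\<in>Sp. 2 * cmod z + 2 < t}"
  have B2: "B \<subseteq> {2<..}"
  proof
    fix t assume "t \<in> B"
    hence "2 * cmod z + 2 < t" by (simp add: B_def)
    moreover have "0 \<le> cmod z" by simp
    ultimately have "2 < t" by linarith
    thus "t \<in> {2<..}" by simp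
  qed
  define C where "C = 16 * pi * K * sqrt K"
  have C0: "C \<ge> 0" unfolding C_def using K1 by simp
  have "(\<lambda>t. 1/t) summable_on B"
  proof (rule dyadic[OF B2 C0])
    fix T G assume a: "1 \<le> T" "finite G" "G \<subseteq> B" "\<forall>t\<in>G. t \<le> T"
    have GS: "G \<subseteq> Sp" using a(3) unfolding B_def by blast
    have "real (card G) \<le> 16 * pi * K * sqrt (T * K)"
      by (rule count_bound[OF a(1) a(2) GS a(4)])
    also have "16 * pi * K * sqrt (T * K) = C * sqrt T"
      unfolding C_def real_sqrt_mult by (simp only: mult.commute mult.left_commute)
    finally show "real (card G) \<le> C * sqrt T" .
  qed
  thus ?thesis unfolding B_def .
qed

lemma Mb_B:
  assumes tR: "2 * cmod z + 2 < t"
  shows "Mb z t \<le> 2 * K * cmod (xi' pi z) / k0 * (1 / t)"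
proof -
  define Z where "Z = cmod (xi' pi z)"
  have cz: "cmod z \<ge> 0" by simp
  have tri: "cmod (complex_of_real t) - cmod z \<le> cmod (complex_of_real t - z)"
    by (rule norm_triangle_ineq2)
  have tp: "t > 0" using tR cz by linarith
  have "cmod (complex_of_real t) = t" using tp by simp
  hence dge: "t / 2 \<le> cmod (complex_of_real t - z)" using tri tR cz by linarith
  have ne: "complex_of_real t \<noteq> z"
  proof
    assume e: "complex_of_real t = z"
    have "cmod (complex_of_real t) = t" using tp by simp
    hence "cmod z = t" unfolding e[symmetric] .
    thus False using tR cz by linarith
  qed
  have "Mb z t = K * Z / (k0 * cmod (complex_of_real t - z))" unfolding Mb_def Z_def using ne by (simp only: if_False simp_thms)
  also have "\<dots> \<le> K * Z / (k0 * (t / 2))"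
  proof -
    have m: "k0 * (t / 2) \<le> k0 * cmod (complex_of_real t - z)"
      by (rule mult_left_mono[OF dge]) (use k0_pos in linarith)
    have p: "0 < k0 * (t / 2)" using k0_pos tp by simp
    have KZ: "0 \<le> K * Z" using K1 by (simp add: Z_def)
    have p2: "0 < k0 * cmod (complex_of_real t - z)" using p m by linarith
    have pp: "0 < k0 * cmod (complex_of_real t - z) * (k0 * (t / 2))" by (rule mult_pos_pos[OF p2 p])
    show ?thesis by (rule divide_left_mono[OF m KZ pp])
  qed
  also have "K * Z / (k0 * (t / 2)) = 2 * K * Z / k0 * (1 / t)"
  proof -
    have "k0 * (t / 2) = (k0 * t) / 2" by simp
    hence "K * Z / (k0 * (t / 2)) = 2 * (K * Z) / (k0 * t)" by simp
    also have "\<dots> = 2 * K * Z / k0 * (1 / t)" by simp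
    finally show ?thesis .
  qed
  finally show ?thesis by (simp add: Z_def)
qed

lemma Mb_summable: "Mb z summable_on Sp"
proof -
  have SpAB: "Sp = {t\<in>Sp. t \<le> 2 * cmod z + 2} \<union> {t\<in>Sp. 2 * cmod z + 2 < t}" by auto
  have sA: "Mb z summable_on {t\<in>Sp. t \<le> 2 * cmod z + 2}" by (rule summable_on_finite[OF Sp_fin])
  have sB: "Mb z summable_on {t\<in>Sp. 2 * cmod z + 2 < t}"
  proof (rule summable_on_comparison_test[OF summable_on_cmult_right[OF inv_summable[of z],
        of "2 * K * cmod (xi' pi z) / k0"]])
    fix t assume t: "t \<in> {t\<in>Sp. 2 * cmod z + 2 < t}"
    thus "Mb z t \<le> 2 * K * cmod (xi' pi z) / k0 * (1 / t)" by (intro Mb_B) simp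
  qed (rule Mb_nonneg)
  show ?thesis by (subst SpAB) (rule summable_on_union[OF sA sB])
qed

end




lemma ac_cont:
  assumes "abs_continuous_on a c f"
  shows "continuous_on {a..c} f"
  unfolding continuous_on_iff
proof (intro ballI allI impI)
  fix x e :: real assume x: "x \<in> {a..c}" and e: "0 < e"
  have ex: "\<exists>d>0. \<forall>(n::nat) (l::nat \<Rightarrow> real) (r::nat \<Rightarrow> real).
        (\<forall>i<n. a \<le> l i \<and> l i \<le> r i \<and> r i \<le> c) \<and>
        (\<forall>i<n. \<forall>j<n. i \<noteq> j \<longrightarrow> r i \<le> l j \<or> r j \<le> l i) \<and>
        (\<Sum>i<n. r i - l i) < d
        \<longrightarrow> (\<Sum>i<n. \<bar>f (r i) - f (l i)\<bar>) < e"
    by (rule assms[unfolded abs_continuous_on_def, THEN spec[of _ e], THEN mp, OF e])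
  then obtain d where d: "d > 0" and H: "\<forall>(n::nat) (l::nat \<Rightarrow> real) (r::nat \<Rightarrow> real).
        (\<forall>i<n. a \<le> l i \<and> l i \<le> r i \<and> r i \<le> c) \<and>
        (\<forall>i<n. \<forall>j<n. i \<noteq> j \<longrightarrow> r i \<le> l j \<or> r j \<le> l i) \<and>
        (\<Sum>i<n. r i - l i) < d
        \<longrightarrow> (\<Sum>i<n. \<bar>f (r i) - f (l i)\<bar>) < e"
    by (elim exE conjE)
  show "\<exists>d>0. \<forall>x'\<in>{a..c}. dist x' x < d \<longrightarrow> dist (f x') (f x) < e"
  proof (intro exI[of _ d] conjI ballI impI d)
    fix y assume y: "y \<in> {a..c}" and dy: "dist y x < d"
    have c1: "\<forall>i<(1::nat). a \<le> min x y \<and> min x y \<le> max x y \<and> max x y \<le> c"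
      using x y by (simp add: min_def max_def)
    have c2: "\<forall>i<(1::nat). \<forall>j<1. i \<noteq> j \<longrightarrow> max x y \<le> min x y \<or> max x y \<le> min x y"
      by auto
    have "max x y - min x y = \<bar>y - x\<bar>" by (simp add: max_def min_def)
    hence c3: "(\<Sum>i<(1::nat). max x y - min x y) < d" using dy by (simp add: dist_real_def)
    have "(\<Sum>i<(1::nat). \<bar>f (max x y) - f (min x y)\<bar>) < e"
      by (rule mp[OF H[THEN spec[of _ 1], THEN spec[of _ "\<lambda>_. min x y"], THEN spec[of _ "\<lambda>_. max x y"]]
             conjI[OF c1 conjI[OF c2 c3]]])
    hence "\<bar>f (max x y) - f (min x y)\<bar> < e" by simp
    show "dist (f y) (f x) < e"
    proof (cases "x \<le> y")
      case True
      hence "max x y = y" "min x y = x" by auto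
      thus ?thesis using \<open>\<bar>f (max x y) - f (min x y)\<bar> < e\<close> by (simp add: dist_real_def)
    next
      case False
      hence "max x y = x" "min x y = y" by auto
      hence "\<bar>f x - f y\<bar> < e" using \<open>\<bar>f (max x y) - f (min x y)\<bar> < e\<close> by simp
      thus ?thesis by (simp add: dist_real_def abs_minus_commute)
    qed
  qed
qed

theorem proposition4p7:
  fixes b :: real and V :: "real \<Rightarrow> real"
    and xi xi' :: "real \<Rightarrow> complex \<Rightarrow> complex" and z :: complex
  assumes b: "b > pi"
    and V_ac: "abs_continuous_on 0 b V"
    and xi_init: "\<And>w. xi 0 w = 1" "\<And>w. xi' 0 w = 0"
    and xi_deriv: "\<And>w x. x \<in> {0..b} \<Longrightarrow>
          ((\<lambda>y. xi y w) has_vector_derivative xi' x w) (at x within {0..b})"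
    and xi'_deriv: "\<And>w x. x \<in> {0..b} \<Longrightarrow>
          ((\<lambda>y. xi' y w) has_vector_derivative (complex_of_real (V x) - w) * xi x w)
             (at x within {0..b})"
  defines "S \<equiv> {t::real. xi' pi (complex_of_real t) = 0}"
    and "c \<equiv> (\<lambda>t. k_pi xi t z / k_pi xi t (complex_of_real t))"
  shows "(\<forall>x\<in>{0..b}. (\<lambda>t. norm (c t * xi x (complex_of_real t))) summable_on S)
     \<and> uniform_limit {0..b}
         (\<lambda>F x. \<Sum>t\<in>F. norm (c t * xi x (complex_of_real t)))
         (\<lambda>x. \<Sum>\<^sub>\<infinity>t\<in>S. norm (c t * xi x (complex_of_real t)))
         (finite_subsets_at_top S)
     \<and> uniform_limit {0..b}
         (\<lambda>F x. \<Sum>t\<in>F. c t * xi x (complex_of_real t))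
         (\<lambda>x. \<Sum>\<^sub>\<infinity>t\<in>S. c t * xi x (complex_of_real t))
         (finite_subsets_at_top S)"
proof -
  have Vc: "continuous_on {0..b} V" by (rule ac_cont[OF V_ac])
  have SLi: "SL b V xi xi'"
    by (rule SL.intro[OF b Vc xi_init(1) xi_init(2) xi_deriv xi'_deriv])
  interpret SL b V xi xi' by (rule SLi)
  have SS: "S = Sp" unfolding S_def Sp_def by (rule refl)
  have bd: "norm (c t * xi x (complex_of_real t)) \<le> Mb z t" if t: "t \<in> S" and x: "x \<in> {0..b}" for t x
  proof -
    have tS: "t \<in> Sp" using t unfolding SS .
    show ?thesis unfolding c_def by (rule term_bound[OF tS x])
  qed
  have bd2: "norm (norm (c t * xi x (complex_of_real t))) \<le> Mb z t" if t: "t \<in> S" and x: "x \<in> {0..b}" for t x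
    using bd[OF t x] by simp
  have M: "Mb z summable_on S" unfolding SS by (rule Mb_summable)
  have p1: "\<forall>x\<in>{0..b}. (\<lambda>t. norm (c t * xi x (complex_of_real t))) summable_on S"
  proof
    fix x assume x: "x \<in> {0..b}"
    show "(\<lambda>t. norm (c t * xi x (complex_of_real t))) summable_on S"
    proof (rule summable_on_comparison_test[OF M])
      fix t assume t: "t \<in> S"
      show "norm (c t * xi x (complex_of_real t)) \<le> Mb z t" by (rule bd[OF t x])
      show "0 \<le> norm (c t * xi x (complex_of_real t))" by (rule norm_ge_zero)
    qed
  qed
  have p2: "uniform_limit {0..b}
         (\<lambda>F x. \<Sum>t\<in>F. norm (c t * xi x (complex_of_real t)))
         (\<lambda>x. \<Sum>\<^sub>\<infinity>t\<in>S. norm (c t * xi x (complex_of_real t)))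
         (finite_subsets_at_top S)"
    by (rule unif_M[OF M bd2])
  have p3: "uniform_limit {0..b}
         (\<lambda>F x. \<Sum>t\<in>F. c t * xi x (complex_of_real t))
         (\<lambda>x. \<Sum>\<^sub>\<infinity>t\<in>S. c t * xi x (complex_of_real t))
         (finite_subsets_at_top S)"
    by (rule unif_M[OF M bd])
  show ?thesis using p1 p2 p3 by (intro conjI)
qed



end
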